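(* Consider a tree power network $(\mathcal{V},\mathcal{E})$, $\mathcal{V}=\{1,\dots,n\}$, with variable voltage magnitudes $\underline{V}_i\le|V_i|\le\overline{V}_i$ ($0<\underline{V}_i\le\overline{V}_i$), angle limits $\underline{\theta}_{ik}\le 0\le\overline{\theta}_{ik}$ with $|\underline{\theta}_{ik}|,|\overline{\theta}_{ik}|<90^\circ$, and bus power upper bounds $P_i\le\overline{P}_i$ (no lower bounds). Let $\mathcal{P}_\theta=\bigcup_{\underline{\mathbf{v}}\le\tilde{\mathbf{v}}\le\overline{\mathbf{v}}}\mathcal{P}_\theta(\tilde{\mathbf{v}})$, $\mathcal{P}=\mathcal{P}_\theta\cap\mathcal{P}_P$, and $\overline{\mathrm{conv}}(\mathcal{P}_\theta)=\bigcup_{\underline{\mathbf{v}}\le\tilde{\mathbf{v}}\le\overline{\mathbf{v}}}\overline{\mathrm{conv}}(\mathcal{P}_\theta(\tilde{\mathbf{v}}))$. Then $$\mathcal{O}(\mathcal{P})=\mathcal{O}(\mathrm{conv}(\mathcal{P}))=\mathcal{O}(\overline{\mathrm{conv}}(\mathcal{P}_\theta)\cap\mathcal{P}_P).$$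
   Context: Each line $(i,k)$ has admittance $y_{ik}=g_{ik}-jb_{ik}$, $g_{ik},b_{ik}\ge0$. $\underline{\mathbf{v}}=(\underline V_1,\dots,\underline V_n)$, $\overline{\mathbf{v}}=(\overline V_1,\dots,\overline V_n)$. For fixed voltage magnitudes $|V_i|=\tilde V_i$, the flows on line $(i,k)$ with $\theta_{ik}=\theta_i-\theta_k$ are $P_{ik}=\tilde V_i^2 g_{ik}+\tilde V_i\tilde V_k b_{ik}\sin\theta_{ik}-\tilde V_i\tilde V_k g_{ik}\cos\theta_{ik}$, $P_{ki}=\tilde V_k^2 g_{ik}-\tilde V_i\tilde V_k b_{ik}\sin\theta_{ik}-\tilde V_i\tilde V_k g_{ik}\cos\theta_{ik}$; $\mathcal{F}_{\theta_{ik}}(\tilde{\mathbf{v}})$ is the set of such $(P_{ik},P_{ki})$ for $\theta_{ik}\in[\underline{\theta}_{ik},\overline{\theta}_{ik}]$. $\mathbf{A}$ is the $n\times2|\mathcal{E}|$ matrix with $A(i,(k,l))=1$ if $i=k$ and $0$ otherwise (so $(\mathbf{A}\mathbf{f})_i=\sum_{k\sim i}P_{ik}$). $\mathcal{P}_\theta(\tilde{\mathbf{v}})=\mathbf{A}\prod_{(i,k)\in\mathcal{E}}\mathcal{F}_{\theta_{ik}}(\tilde{\mathbf{v}})$ and $\mathcal{P}_P=\{\mathbf{p}:P_i\le\overline{P}_i\ \forall i\}$. For a Hermitian $n\times n$ matrix $\mathbf{W}$, $W_{ik}$ is its $(i,k)$ entry and $\mathbf{W}_{ik}$ its $2\times2$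 submatrix on rows/columns $i,k$. $\mathcal{H}_{ik}(\tilde{\mathbf{v}})$ is the set of Hermitian $\mathbf{W}$ with $\mathbf{W}_{ik}$ positive semidefinite, $W_{ii}=\tilde V_i^2$, $W_{kk}=\tilde V_k^2$, and $\tan(\underline{\theta}_{ik})\mathrm{Re}(W_{ik})\le\mathrm{Im}(W_{ik})\le\tan(\overline{\theta}_{ik})\mathrm{Re}(W_{ik})$. With $\mathbf{Y}_{ik}=\begin{bmatrix}y_{ik}&-y_{ik}\\-y_{ik}&y_{ik}\end{bmatrix}$, $\overline{\mathrm{conv}}(\mathcal{F}_{\theta_{ik}}(\tilde{\mathbf{v}}))=\{\mathrm{Re}(\mathrm{diag}(\mathbf{W}_{ik}\mathbf{Y}_{ik}^H)):\mathbf{W}\in\mathcal{H}_{ik}(\tilde{\mathbf{v}})\}$ and $\overline{\mathrm{conv}}(\mathcal{P}_\theta(\tilde{\mathbf{v}}))=\mathbf{A}\prod_{(i,k)}\overline{\mathrm{conv}}(\mathcal{F}_{\theta_{ik}}(\tilde{\mathbf{v}}))$. $\mathcal{O}(\mathcal{A})$ is the set of Pareto-optimal points of $\mathcal{A}$ (no $y\in\mathcal{A}$ with $y\le x$ componentwise, strict in some coordinate); $\mathrm{conv}$ is the convex hull. *)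

theory Defs
  imports "HOL-Analysis.Analysis"
begin

text \<open>Buses are the elements of a finite type 'n (so V = {1..n} with n = CARD('n)).
  Lines are given as a set E of ordered pairs (i,k) (one orientation per line).\<close>

definition undirected_adj :: "('n \<times> 'n) set \<Rightarrow> ('n \<times> 'n) set" where
  "undirected_adj E = E \<union> converse E"

definition is_tree :: "('n::finite \<times> 'n) set \<Rightarrow> bool" where
  "is_tree E \<longleftrightarrow> (\<forall>(i,k)\<in>E. i \<noteq> k \<and> (k,i) \<notin> E)
     \<and> (undirected_adj E)\<^sup>* = UNIV \<and> card E = CARD('n) - 1"

text \<open>Flow P_ik (sending end) and P_ki (receiving end) on line (i,k) with angle difference t.\<close>
definition flow_from :: "real \<Rightarrow> real \<Rightarrow> real \<Rightarrow> real \<Rightarrow> real \<Rightarrow> real" where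
  "flow_from g b Vi Vk t = Vi\<^sup>2 * g + Vi * Vk * b * sin t - Vi * Vk * g * cos t"

definition flow_to :: "real \<Rightarrow> real \<Rightarrow> real \<Rightarrow> real \<Rightarrow> real \<Rightarrow> real" where
  "flow_to g b Vi Vk t = Vk\<^sup>2 * g - Vi * Vk * b * sin t - Vi * Vk * g * cos t"

definition injection ::
  "('n::finite \<times> 'n) set \<Rightarrow> ('n \<Rightarrow> 'n \<Rightarrow> real) \<Rightarrow> ('n \<Rightarrow> 'n \<Rightarrow> real)
   \<Rightarrow> real^'n \<Rightarrow> ('n \<Rightarrow> 'n \<Rightarrow> real) \<Rightarrow> real^'n" where
  "injection E g b v th = (\<chi> i.
      (\<Sum>e\<in>{e\<in>E. fst e = i}. flow_from (g (fst e) (snd e)) (b (fst e) (snd e))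
                                 (v $ fst e) (v $ snd e) (th (fst e) (snd e)))
    + (\<Sum>e\<in>{e\<in>E. snd e = i}. flow_to (g (fst e) (snd e)) (b (fst e) (snd e))
                                 (v $ fst e) (v $ snd e) (th (fst e) (snd e))))"

definition P_theta_v ::
  "('n::finite \<times> 'n) set \<Rightarrow> ('n \<Rightarrow> 'n \<Rightarrow> real) \<Rightarrow> ('n \<Rightarrow> 'n \<Rightarrow> real)
   \<Rightarrow> ('n \<Rightarrow> 'n \<Rightarrow> real) \<Rightarrow> ('n \<Rightarrow> 'n \<Rightarrow> real) \<Rightarrow> real^'n \<Rightarrow> (real^'n) set" where
  "P_theta_v E g b thL thU v =
     {injection E g b v th | th. \<forall>(i,k)\<in>E. thL i k \<le> th i k \<and> th i k \<le> thU i k}"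

definition P_theta ::
  "('n::finite \<times> 'n) set \<Rightarrow> ('n \<Rightarrow> 'n \<Rightarrow> real) \<Rightarrow> ('n \<Rightarrow> 'n \<Rightarrow> real)
   \<Rightarrow> ('n \<Rightarrow> 'n \<Rightarrow> real) \<Rightarrow> ('n \<Rightarrow> 'n \<Rightarrow> real) \<Rightarrow> real^'n \<Rightarrow> real^'n \<Rightarrow> (real^'n) set" where
  "P_theta E g b thL thU vL vU =
     (\<Union>v\<in>{v. \<forall>i. vL $ i \<le> v $ i \<and> v $ i \<le> vU $ i}. P_theta_v E g b thL thU v)"

definition P_theta_relax ::
  "('n::finite \<times> 'n) set \<Rightarrow> ('n \<Rightarrow> 'n \<Rightarrow> real) \<Rightarrow> ('n \<Rightarrow> 'n \<Rightarrow> real)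
   \<Rightarrow> ('n \<Rightarrow> 'n \<Rightarrow> real) \<Rightarrow> ('n \<Rightarrow> 'n \<Rightarrow> real) \<Rightarrow> real^'n \<Rightarrow> real^'n \<Rightarrow> (real^'n) set" where
  "P_theta_relax E g b thL thU vL vU =
     (\<Union>v\<in>{v. \<forall>i. vL $ i \<le> v $ i \<and> v $ i \<le> vU $ i}.
        closure (convex hull (P_theta_v E g b thL thU v)))"

definition P_P :: "real^'n \<Rightarrow> (real^'n) set" where
  "P_P pU = {p. \<forall>i. p $ i \<le> pU $ i}"

definition pareto :: "(real^'n) set \<Rightarrow> (real^'n) set" where
  "pareto A = {x\<in>A. \<not> (\<exists>y\<in>A. (\<forall>i. y $ i \<le> x $ i) \<and> (\<exists>i. y $ i < x $ i))}"

end

theory Submission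
  imports Defs
begin

lemma edge_ineq:
  fixes S :: "'a set" and u a c t :: "'a \<Rightarrow> real"
  assumes fin: "finite S" and u0: "\<forall>y\<in>S. 0 \<le> u y" and u1: "sum u S = 1"
    and ac: "\<forall>y\<in>S. 0 < a y \<and> 0 < c y"
    and tb: "\<forall>y\<in>S. tL \<le> t y \<and> t y \<le> tU"
    and tL: "tL \<le> 0" "- (pi/2) < tL" and tU: "0 \<le> tU" "tU < pi/2"
    and g: "0 \<le> g" and b: "0 \<le> b"
  defines "A \<equiv> sqrt (\<Sum>y\<in>S. u y * (a y)\<^sup>2)"
    and "C \<equiv> sqrt (\<Sum>y\<in>S. u y * (c y)\<^sup>2)"
    and "I \<equiv> (\<Sum>y\<in>S. u y * a y * c y * sin (t y))"
  shows "tL \<le> arcsin (I / (A*C)) \<and> arcsin (I / (A*C)) \<le> tU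
    \<and> flow_from g b A C (arcsin (I / (A*C))) \<le> (\<Sum>y\<in>S. u y * flow_from g b (a y) (c y) (t y))
    \<and> flow_to g b A C (arcsin (I / (A*C))) \<le> (\<Sum>y\<in>S. u y * flow_to g b (a y) (c y) (t y))"
proof -
  define R where "R = (\<Sum>y\<in>S. u y * a y * c y * cos (t y))"
  define W where "W = (\<Sum>y\<in>S. u y * a y * c y)"
  have "\<exists>y0\<in>S. u y0 > 0"
  proof (rule ccontr)
    assume "\<not> ?thesis"
    then have "\<forall>y\<in>S. u y = 0" using u0 by (simp add: not_less order.antisym)
    then show False using u1 by simp
  qed
  then obtain y0 where y0: "y0 \<in> S" "u y0 > 0" by blast
  have pa: "(\<Sum>y\<in>S. u y * (a y)\<^sup>2) > 0"
  proof -
    have "u y0 * (a y0)\<^sup>2 > 0" using y0 ac by auto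
    also have "u y0 * (a y0)\<^sup>2 \<le> (\<Sum>y\<in>S. u y * (a y)\<^sup>2)"
      by (rule member_le_sum) (use y0 u0 fin in auto)
    finally show ?thesis .
  qed
  have pc: "(\<Sum>y\<in>S. u y * (c y)\<^sup>2) > 0"
  proof -
    have "u y0 * (c y0)\<^sup>2 > 0" using y0 ac by auto
    also have "u y0 * (c y0)\<^sup>2 \<le> (\<Sum>y\<in>S. u y * (c y)\<^sup>2)"
      by (rule member_le_sum) (use y0 u0 fin in auto)
    finally show ?thesis .
  qed
  have A0: "A > 0" and C0: "C > 0" using pa pc by (auto simp: A_def C_def)
  have AC0: "A * C > 0" using A0 C0 by simp
  have A2: "A\<^sup>2 = (\<Sum>y\<in>S. u y * (a y)\<^sup>2)" using pa by (simp add: A_def)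
  have C2: "C\<^sup>2 = (\<Sum>y\<in>S. u y * (c y)\<^sup>2)" using pc by (simp add: C_def)
  have W0: "W \<ge> 0" unfolding W_def using u0 ac by (intro sum_nonneg) auto
  have "W\<^sup>2 \<le> (\<Sum>y\<in>S. (sqrt (u y) * a y)\<^sup>2) * (\<Sum>y\<in>S. (sqrt (u y) * c y)\<^sup>2)"
  proof -
    have "W = (\<Sum>y\<in>S. (sqrt (u y) * a y) * (sqrt (u y) * c y))"
      unfolding W_def using u0 by (intro sum.cong) (auto simp: algebra_simps)
    then show ?thesis using Cauchy_Schwarz_ineq_sum[of "\<lambda>y. sqrt (u y) * a y" "\<lambda>y. sqrt (u y) * c y" S] by simp
  qed
  also have "\<dots> = A\<^sup>2 * C\<^sup>2"
  proof -
    have "(\<Sum>y\<in>S. (sqrt (u y) * a y)\<^sup>2) = A\<^sup>2" unfolding A2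
      using u0 by (intro sum.cong) (auto simp: power_mult_distrib)
    moreover have "(\<Sum>y\<in>S. (sqrt (u y) * c y)\<^sup>2) = C\<^sup>2" unfolding C2
      using u0 by (intro sum.cong) (auto simp: power_mult_distrib)
    ultimately show ?thesis by simp
  qed
  finally have WAC2: "W\<^sup>2 \<le> (A*C)\<^sup>2" by (simp add: power_mult_distrib)
  have WAC: "W \<le> A * C" using power2_le_imp_le[OF WAC2] AC0 by simp
  define z where "z = (\<Sum>y\<in>S. complex_of_real (u y * a y * c y) * cis (t y))"
  have Rez: "Re z = R" unfolding z_def R_def by (simp add: Re_sum cis.sel)
  have Imz: "Im z = I" unfolding z_def I_def by (simp add: Im_sum cis.sel)
  have "cmod z \<le> (\<Sum>y\<in>S. cmod (complex_of_real (u y * a y * c y) * cis (t y)))"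
    unfolding z_def by (rule norm_sum)
  also have "\<dots> = W" unfolding W_def using u0 ac
    by (intro sum.cong) (auto simp: norm_mult abs_mult)
  finally have zW: "cmod z \<le> W" .
  have RI: "R\<^sup>2 + I\<^sup>2 \<le> (A*C)\<^sup>2"
  proof -
    have "R\<^sup>2 + I\<^sup>2 = (cmod z)\<^sup>2" using Rez Imz by (simp add: cmod_power2)
    also have "\<dots> \<le> W\<^sup>2" using zW by (simp add: power_mono)
    finally show ?thesis using WAC2 by linarith
  qed
  have sU: "0 \<le> sin tU" using tU by (intro sin_ge_zero) auto
  have sL: "sin tL \<le> 0"
  proof -
    have "0 \<le> sin (-tL)" using tL by (intro sin_ge_zero) auto
    then show ?thesis by simp
  qed
  have IU: "I \<le> sin tU * W"
  proof -
    have "I \<le> (\<Sum>y\<in>S. u y * a y * c y * sin tU)" unfolding I_def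
    proof (intro sum_mono mult_left_mono)
      fix y assume y: "y \<in> S"
      show "sin (t y) \<le> sin tU" using tb y tL tU by (subst sin_mono_le_eq) auto
      show "0 \<le> u y * a y * c y" using y u0 ac by auto
    qed
    also have "\<dots> = sin tU * W" unfolding W_def by (simp add: sum_distrib_left mult.commute)
    finally show ?thesis .
  qed
  have IL: "sin tL * W \<le> I"
  proof -
    have "(\<Sum>y\<in>S. u y * a y * c y * sin tL) \<le> I" unfolding I_def
    proof (intro sum_mono mult_left_mono)
      fix y assume y: "y \<in> S"
      show "sin tL \<le> sin (t y)" using tb y tL tU by (subst sin_mono_le_eq) auto
      show "0 \<le> u y * a y * c y" using y u0 ac by auto
    qed
    moreover have "(\<Sum>y\<in>S. u y * a y * c y * sin tL) = sin tL * W" unfolding W_def by (simp add: sum_distrib_left mult.commute)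
    ultimately show ?thesis by simp
  qed
  have q1: "I / (A*C) \<le> sin tU"
  proof -
    have "I \<le> sin tU * (A*C)" using IU WAC sU by (meson mult_left_mono order_trans)
    then show ?thesis using AC0 by (simp add: divide_le_eq)
  qed
  have q2: "sin tL \<le> I / (A*C)"
  proof -
    have "sin tL * (A*C) \<le> I" using IL WAC sL by (meson mult_left_mono_neg order_trans)
    then show ?thesis using AC0 by (simp add: le_divide_eq)
  qed
  have qb1: "I/(A*C) \<le> 1" using q1 sin_le_one order_trans by blast
  have qb2: "-1 \<le> I/(A*C)" using q2 sin_ge_minus_one order_trans by blast
  define th where "th = arcsin (I / (A*C))"
  have th1: "tL \<le> th" unfolding th_def using qb1 qb2 q2 tL tU
    by (subst le_arcsin_iff) auto
  have th2: "th \<le> tU" unfolding th_def using qb1 qb2 q1 tL tU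
    by (subst arcsin_le_iff) auto
  have "sin th = I / (A*C)" unfolding th_def using qb1 qb2 by simp
  then have sth: "A * C * sin th = I" using A0 C0 by simp
  have cth: "R \<le> A * C * cos th"
  proof -
    have "A * C * cos th = sqrt ((A*C)\<^sup>2 - I\<^sup>2)"
    proof -
      have "A * C * cos th = sqrt ((A*C)\<^sup>2) * sqrt (1 - (I/(A*C))\<^sup>2)"
        unfolding th_def using qb1 qb2 AC0 by (simp add: cos_arcsin)
      also have "\<dots> = sqrt ((A*C)\<^sup>2 * (1 - (I/(A*C))\<^sup>2))" by (simp add: real_sqrt_mult)
      also have "(A*C)\<^sup>2 * (1 - (I/(A*C))\<^sup>2) = (A*C)\<^sup>2 - I\<^sup>2"
        using A0 C0 by (simp add: field_simps power2_eq_square)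
      finally show ?thesis .
    qed
    also have "\<dots> \<ge> sqrt (R\<^sup>2)" using RI by (intro real_sqrt_le_mono) linarith
    finally show ?thesis by simp
  qed
  have ff: "flow_from g b A C th \<le> (\<Sum>y\<in>S. u y * flow_from g b (a y) (c y) (t y))"
  proof -
    have "(\<Sum>y\<in>S. u y * flow_from g b (a y) (c y) (t y)) = g * A\<^sup>2 + b * I - g * R"
      unfolding flow_from_def A2 I_def R_def
      by (simp add: sum_distrib_left sum_subtractf sum.distrib algebra_simps)
    moreover have "flow_from g b A C th = g * A\<^sup>2 + b * (A * C * sin th) - g * (A * C * cos th)"
      unfolding flow_from_def by (simp add: algebra_simps)
    ultimately show ?thesis using sth cth g by (simp add: mult_left_mono)
  qed
  have ft: "flow_to g b A C th \<le> (\<Sum>y\<in>S. u y * flow_to g b (a y) (c y) (t y))"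
  proof -
    have "(\<Sum>y\<in>S. u y * flow_to g b (a y) (c y) (t y)) = g * C\<^sup>2 - b * I - g * R"
      unfolding flow_to_def C2 I_def R_def
      by (simp add: sum_distrib_left sum_subtractf sum.distrib algebra_simps)
    moreover have "flow_to g b A C th = g * C\<^sup>2 - b * (A * C * sin th) - g * (A * C * cos th)"
      unfolding flow_to_def by (simp add: algebra_simps)
    ultimately show ?thesis using sth cth g by (simp add: mult_left_mono)
  qed
  show ?thesis using th1 th2 ff ft unfolding th_def by blast
qed


lemma injection_cong:
  assumes "\<forall>(i,k)\<in>E. th i k = th' i k"
  shows "injection E g b v th = injection E g b v th'"
proof -
  have h: "\<And>e. e \<in> E \<Longrightarrow> th (fst e) (snd e) = th' (fst e) (snd e)"
    using assms by (metis (mono_tags, lifting) case_prodD prod.collapse)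
  show ?thesis unfolding injection_def
    by (rule vec_eq_iff[THEN iffD2], simp) (intro allI arg_cong2[where f="(+)"] sum.cong; simp add: h)
qed

lemma compact_Ptv:
  fixes E :: "('n::finite \<times> 'n) set"
  assumes "\<forall>(i,k)\<in>E. thL i k \<le> thU i k"
  shows "compact (P_theta_v E g b thL thU v)"
proof -
  define lo :: "real^('n\<times>'n)" where "lo = (\<chi> p. if p \<in> E then thL (fst p) (snd p) else 0)"
  define hi :: "real^('n\<times>'n)" where "hi = (\<chi> p. if p \<in> E then thU (fst p) (snd p) else 0)"
  define f where "f = (\<lambda>t::real^('n\<times>'n). injection E g b v (\<lambda>i k. t $ (i,k)))"
  have eq: "P_theta_v E g b thL thU v = f ` cbox lo hi"
  proof (rule set_eqI, rule iffI)
    fix x assume "x \<in> P_theta_v E g b thL thU v"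
    then obtain th where x: "x = injection E g b v th"
      and th: "\<forall>(i,k)\<in>E. thL i k \<le> th i k \<and> th i k \<le> thU i k"
      unfolding P_theta_v_def by blast
    define t :: "real^('n\<times>'n)" where "t = (\<chi> p. if p \<in> E then th (fst p) (snd p) else 0)"
    have "t \<in> cbox lo hi" unfolding mem_box_cart t_def lo_def hi_def using th by auto
    moreover have "x = f t" unfolding x f_def
      by (rule injection_cong) (auto simp: t_def)
    ultimately show "x \<in> f ` cbox lo hi" by blast
  next
    fix x assume "x \<in> f ` cbox lo hi"
    then obtain t where t: "t \<in> cbox lo hi" and x: "x = f t" by blast
    have "\<forall>(i,k)\<in>E. thL i k \<le> t $ (i,k) \<and> t $ (i,k) \<le> thU i k"
      using t unfolding mem_box_cart lo_def hi_def
      by (auto dest!: spec[where x="(_,_)"] split: if_splits)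
    then show "x \<in> P_theta_v E g b thL thU v" unfolding P_theta_v_def x f_def by blast
  qed
  have "continuous_on (cbox lo hi) f"
    unfolding f_def injection_def flow_from_def flow_to_def
    by (intro continuous_intros)
  then show ?thesis unfolding eq by (intro compact_continuous_image compact_cbox)
qed

lemma dominated:
  fixes E :: "('n::finite \<times> 'n) set"
    and g b thL thU :: "'n \<Rightarrow> 'n \<Rightarrow> real"
    and vL vU :: "real^'n"
  assumes gb: "\<forall>(i,k)\<in>E. g i k \<ge> 0 \<and> b i k \<ge> 0"
    and volt: "\<forall>i. 0 < vL $ i \<and> vL $ i \<le> vU $ i"
    and ang: "\<forall>(i,k)\<in>E. thL i k \<le> 0 \<and> 0 \<le> thU i k
                 \<and> \<bar>thL i k\<bar> < pi / 2 \<and> \<bar>thU i k\<bar> < pi / 2"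
    and x: "x \<in> convex hull (P_theta E g b thL thU vL vU)"
  shows "\<exists>y\<in>P_theta E g b thL thU vL vU. \<forall>i. y $ i \<le> x $ i"
proof -
  obtain S u where fin: "finite S" and SP: "S \<subseteq> P_theta E g b thL thU vL vU"
    and u0: "\<forall>y\<in>S. 0 \<le> u y" and u1: "sum u S = 1" and xs: "(\<Sum>y\<in>S. u y *\<^sub>R y) = x"
  proof -
    have "\<exists>S u. finite S \<and> S \<subseteq> P_theta E g b thL thU vL vU \<and> (\<forall>x\<in>S. 0 \<le> u x) \<and> sum u S = 1 \<and> (\<Sum>v\<in>S. u v *\<^sub>R v) = x"
      using x by (simp add: convex_hull_explicit)
    then show ?thesis using that by blast
  qed
  have ex: "\<forall>y\<in>S. \<exists>p. (\<forall>i. vL $ i \<le> fst p $ i \<and> fst p $ i \<le> vU $ i)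
      \<and> (\<forall>(i,k)\<in>E. thL i k \<le> snd p i k \<and> snd p i k \<le> thU i k)
      \<and> y = injection E g b (fst p) (snd p)"
  proof
    fix y assume "y \<in> S"
    then have "y \<in> P_theta E g b thL thU vL vU" using SP by blast
    then obtain v th where "\<forall>i. vL $ i \<le> v $ i \<and> v $ i \<le> vU $ i"
      "\<forall>(i,k)\<in>E. thL i k \<le> th i k \<and> th i k \<le> thU i k" "y = injection E g b v th"
      unfolding P_theta_def P_theta_v_def by blast
    then show "\<exists>p. (\<forall>i. vL $ i \<le> fst p $ i \<and> fst p $ i \<le> vU $ i)
      \<and> (\<forall>(i,k)\<in>E. thL i k \<le> snd p i k \<and> snd p i k \<le> thU i k)
      \<and> y = injection E g b (fst p) (snd p)" by (intro exI[of _ "(v,th)"]) auto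
  qed
  obtain p where p: "\<forall>y\<in>S. (\<forall>i. vL $ i \<le> fst (p y) $ i \<and> fst (p y) $ i \<le> vU $ i)
      \<and> (\<forall>(i,k)\<in>E. thL i k \<le> snd (p y) i k \<and> snd (p y) i k \<le> thU i k)
      \<and> y = injection E g b (fst (p y)) (snd (p y))"
    using bchoice[OF ex] by blast
  define V where "V y = fst (p y)" for y
  define TH where "TH y = snd (p y)" for y
  have Vb: "\<And>y i. y \<in> S \<Longrightarrow> vL $ i \<le> V y $ i \<and> V y $ i \<le> vU $ i"
    using p unfolding V_def by blast
  have THb: "\<And>y i k. y \<in> S \<Longrightarrow> (i,k) \<in> E \<Longrightarrow> thL i k \<le> TH y i k \<and> TH y i k \<le> thU i k"
    using p unfolding TH_def by blast
  have yinj: "\<And>y. y \<in> S \<Longrightarrow> y = injection E g b (V y) (TH y)"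
    using p unfolding V_def TH_def by blast
  define v' :: "real^'n" where "v' = (\<chi> i. sqrt (\<Sum>y\<in>S. u y * (V y $ i)\<^sup>2))"
  define th' where "th' i k = arcsin ((\<Sum>y\<in>S. u y * V y $ i * V y $ k * sin (TH y i k)) / (v' $ i * v' $ k))" for i k
  have Vpos: "\<And>y i. y \<in> S \<Longrightarrow> 0 < V y $ i" using Vb volt by (meson less_le_trans)
  have edge: "\<And>i k. (i,k) \<in> E \<Longrightarrow> thL i k \<le> th' i k \<and> th' i k \<le> thU i k
    \<and> flow_from (g i k) (b i k) (v' $ i) (v' $ k) (th' i k) \<le> (\<Sum>y\<in>S. u y * flow_from (g i k) (b i k) (V y $ i) (V y $ k) (TH y i k))
    \<and> flow_to (g i k) (b i k) (v' $ i) (v' $ k) (th' i k) \<le> (\<Sum>y\<in>S. u y * flow_to (g i k) (b i k) (V y $ i) (V y $ k) (TH y i k))"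
  proof -
    fix i k assume ik: "(i,k) \<in> E"
    have a: "thL i k \<le> 0" "- (pi/2) < thL i k" "0 \<le> thU i k" "thU i k < pi/2"
      "0 \<le> g i k" "0 \<le> b i k"
      using ang gb ik by auto
    show "?thesis i k"
      unfolding th'_def v'_def vec_lambda_beta
      by (rule edge_ineq[OF fin u0 u1 _ _ a]) (use Vpos THb ik in auto)
  qed
  have v'b: "\<forall>i. vL $ i \<le> v' $ i \<and> v' $ i \<le> vU $ i"
  proof
    fix i
    have lo: "(vL $ i)\<^sup>2 \<le> (\<Sum>y\<in>S. u y * (V y $ i)\<^sup>2)"
    proof -
      have "(vL $ i)\<^sup>2 = (\<Sum>y\<in>S. u y * (vL $ i)\<^sup>2)" using u1 by (simp add: sum_distrib_right[symmetric])
      also have "\<dots> \<le> (\<Sum>y\<in>S. u y * (V y $ i)\<^sup>2)"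
        using u0 Vb volt by (intro sum_mono mult_left_mono power_mono) (auto intro: less_imp_le)
      finally show ?thesis .
    qed
    have hi: "(\<Sum>y\<in>S. u y * (V y $ i)\<^sup>2) \<le> (vU $ i)\<^sup>2"
    proof -
      have "(\<Sum>y\<in>S. u y * (V y $ i)\<^sup>2) \<le> (\<Sum>y\<in>S. u y * (vU $ i)\<^sup>2)"
        using u0 Vb Vpos by (intro sum_mono mult_left_mono power_mono) (auto intro: less_imp_le)
      also have "\<dots> = (vU $ i)\<^sup>2" using u1 by (simp add: sum_distrib_right[symmetric])
      finally show ?thesis .
    qed
    have "sqrt ((vL $ i)\<^sup>2) \<le> v' $ i" unfolding v'_def using lo by (simp only: vec_lambda_beta real_sqrt_le_mono)
    moreover have "v' $ i \<le> sqrt ((vU $ i)\<^sup>2)" unfolding v'_def using hi by (simp only: vec_lambda_beta real_sqrt_le_mono)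
    moreover have "0 \<le> vL $ i" "0 \<le> vU $ i" using volt by (auto intro: less_imp_le order_trans)
    ultimately show "vL $ i \<le> v' $ i \<and> v' $ i \<le> vU $ i" by simp
  qed
  define y' where "y' = injection E g b v' th'"
  have y'P: "y' \<in> P_theta E g b thL thU vL vU"
    unfolding P_theta_def P_theta_v_def y'_def using v'b edge by blast
  have "\<forall>i. y' $ i \<le> x $ i"
  proof
    fix i
    have xi: "x $ i = (\<Sum>y\<in>S. u y * injection E g b (V y) (TH y) $ i)"
      unfolding xs[symmetric] using yinj by (auto intro!: sum.cong)
    have "y' $ i \<le> (\<Sum>e\<in>{e\<in>E. fst e = i}. \<Sum>y\<in>S. u y * flow_from (g (fst e) (snd e)) (b (fst e) (snd e)) (V y $ fst e) (V y $ snd e) (TH y (fst e) (snd e)))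
       + (\<Sum>e\<in>{e\<in>E. snd e = i}. \<Sum>y\<in>S. u y * flow_to (g (fst e) (snd e)) (b (fst e) (snd e)) (V y $ fst e) (V y $ snd e) (TH y (fst e) (snd e)))"
      unfolding y'_def injection_def vec_lambda_beta
      using edge by (intro add_mono sum_mono) auto
    also have "\<dots> = x $ i"
      unfolding xi injection_def vec_lambda_beta
      by (simp add: sum_distrib_left sum.distrib distrib_left sum.swap[of _ S])
    finally show "y' $ i \<le> x $ i" .
  qed
  then show ?thesis using y'P by blast
qed

lemma pareto_eq:
  fixes S T :: "(real^'n) set"
  assumes "S \<subseteq> T" and dom: "\<forall>z\<in>T. \<exists>y\<in>S. \<forall>i. y $ i \<le> z $ i"
  shows "pareto S = pareto T"
proof (rule set_eqI, rule iffI)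
  fix x assume x: "x \<in> pareto S"
  then have xS: "x \<in> S" unfolding pareto_def by blast
  have "\<not> (\<exists>y\<in>T. (\<forall>i. y $ i \<le> x $ i) \<and> (\<exists>i. y $ i < x $ i))"
  proof
    assume "\<exists>y\<in>T. (\<forall>i. y $ i \<le> x $ i) \<and> (\<exists>i. y $ i < x $ i)"
    then obtain y j where y: "y \<in> T" "\<forall>i. y $ i \<le> x $ i" "y $ j < x $ j" by blast
    obtain y' where y': "y' \<in> S" "\<forall>i. y' $ i \<le> y $ i" using dom y(1) by blast
    have "\<forall>i. y' $ i \<le> x $ i" using y y' order_trans by blast
    moreover have "y' $ j < x $ j" using y y' by (meson le_less_trans)
    ultimately show False using x y'(1) unfolding pareto_def by blast
  qed
  then show "x \<in> pareto T" using xS assms(1) unfolding pareto_def by blast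
next
  fix x assume x: "x \<in> pareto T"
  then have xT: "x \<in> T" unfolding pareto_def by blast
  obtain y where y: "y \<in> S" "\<forall>i. y $ i \<le> x $ i" using dom xT by blast
  have "\<not> (\<exists>i. y $ i < x $ i)" using x y assms(1) unfolding pareto_def by blast
  then have "y = x" using y(2) by (simp add: vec_eq_iff not_less order.antisym)
  then have xS: "x \<in> S" using y by simp
  show "x \<in> pareto S" using x xS assms(1) unfolding pareto_def by blast
qed

theorem theorem3:
  fixes E :: "('n::finite \<times> 'n) set"
    and g b thL thU :: "'n \<Rightarrow> 'n \<Rightarrow> real"
    and vL vU pU :: "real^'n"
  assumes tree: "is_tree E"
    and gb: "\<forall>(i,k)\<in>E. g i k \<ge> 0 \<and> b i k \<ge> 0"
    and volt: "\<forall>i. 0 < vL $ i \<and> vL $ i \<le> vU $ i"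
    and ang: "\<forall>(i,k)\<in>E. thL i k \<le> 0 \<and> 0 \<le> thU i k
                 \<and> \<bar>thL i k\<bar> < pi / 2 \<and> \<bar>thU i k\<bar> < pi / 2"
  shows "pareto (P_theta E g b thL thU vL vU \<inter> P_P pU)
           = pareto (convex hull (P_theta E g b thL thU vL vU \<inter> P_P pU))
       \<and> pareto (convex hull (P_theta E g b thL thU vL vU \<inter> P_P pU))
           = pareto (P_theta_relax E g b thL thU vL vU \<inter> P_P pU)"
proof -
  define T where "T = P_theta E g b thL thU vL vU"
  define S1 where "S1 = T \<inter> P_P pU"
  have convPP: "convex (P_P pU)" unfolding convex_def
  proof (intro ballI allI impI)
    fix x y :: "real^'n" and u v :: real
    assume xy: "x \<in> P_P pU" "y \<in> P_P pU" and uv: "0 \<le> u" "0 \<le> v" "u + v = 1"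
    show "u *\<^sub>R x + v *\<^sub>R y \<in> P_P pU" unfolding P_P_def mem_Collect_eq
    proof
      fix i
      have a: "x $ i \<le> pU $ i" "y $ i \<le> pU $ i" using xy unfolding P_P_def by auto
      have "u * x $ i + v * y $ i \<le> u * pU $ i + v * pU $ i"
        using a uv by (simp add: add_mono mult_left_mono)
      also have "\<dots> = pU $ i" using uv(3) by (metis distrib_right mult_1)
      finally show "(u *\<^sub>R x + v *\<^sub>R y) $ i \<le> pU $ i" by simp
    qed
  qed
  have dom: "\<And>z. z \<in> convex hull T \<Longrightarrow> z \<in> P_P pU \<Longrightarrow> \<exists>y\<in>S1. \<forall>i. y $ i \<le> z $ i"
  proof -
    fix z assume z: "z \<in> convex hull T" "z \<in> P_P pU"
    obtain y where y: "y \<in> T" "\<forall>i. y $ i \<le> z $ i"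
      using dominated[OF gb volt ang] z(1) unfolding T_def by blast
    have "y \<in> P_P pU" unfolding P_P_def mem_Collect_eq
    proof
      fix i
      have a: "y $ i \<le> z $ i" using y(2) by blast
      have b: "z $ i \<le> pU $ i" using z(2) unfolding P_P_def by blast
      show "y $ i \<le> pU $ i" using a b by linarith
    qed
    then show "\<exists>y\<in>S1. \<forall>i. y $ i \<le> z $ i" using y unfolding S1_def by blast
  qed
  have thLU: "\<forall>(i,k)\<in>E. thL i k \<le> thU i k" using ang by auto
  have e1: "pareto S1 = pareto (convex hull S1)"
  proof (rule pareto_eq)
    show "S1 \<subseteq> convex hull S1" by (rule hull_subset)
    show "\<forall>z\<in>convex hull S1. \<exists>y\<in>S1. \<forall>i. y $ i \<le> z $ i"
    proof
      fix z assume z: "z \<in> convex hull S1"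
      have "convex hull S1 \<subseteq> convex hull T" unfolding S1_def by (intro hull_mono) auto
      moreover have "convex hull S1 \<subseteq> P_P pU" unfolding S1_def
        using convPP by (intro hull_minimal) auto
      ultimately show "\<exists>y\<in>S1. \<forall>i. y $ i \<le> z $ i" using dom z by blast
    qed
  qed
  have relax: "P_theta_relax E g b thL thU vL vU \<subseteq> convex hull T"
  proof
    fix z assume "z \<in> P_theta_relax E g b thL thU vL vU"
    then obtain v where v: "\<forall>i. vL $ i \<le> v $ i \<and> v $ i \<le> vU $ i"
      and zv: "z \<in> closure (convex hull (P_theta_v E g b thL thU v))"
      unfolding P_theta_relax_def by blast
    have "closure (convex hull (P_theta_v E g b thL thU v)) = convex hull (P_theta_v E g b thL thU v)"
      by (intro closure_closed compact_imp_closed compact_convex_hull compact_Ptv thLU)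
    moreover have "P_theta_v E g b thL thU v \<subseteq> T" unfolding T_def P_theta_def using v by blast
    then have "convex hull (P_theta_v E g b thL thU v) \<subseteq> convex hull T" by (rule hull_mono)
    ultimately show "z \<in> convex hull T" using zv by auto
  qed
  have e2: "pareto S1 = pareto (P_theta_relax E g b thL thU vL vU \<inter> P_P pU)"
  proof (rule pareto_eq)
    show "S1 \<subseteq> P_theta_relax E g b thL thU vL vU \<inter> P_P pU"
    proof
      fix z assume "z \<in> S1"
      then obtain v where v: "\<forall>i. vL $ i \<le> v $ i \<and> v $ i \<le> vU $ i"
        and zv: "z \<in> P_theta_v E g b thL thU v" and zp: "z \<in> P_P pU"
        unfolding S1_def T_def P_theta_def by blast
      have "z \<in> closure (convex hull (P_theta_v E g b thL thU v))"
        using zv hull_subset[of "P_theta_v E g b thL thU v" convex]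
          closure_subset[of "convex hull (P_theta_v E g b thL thU v)"] by blast
      then show "z \<in> P_theta_relax E g b thL thU vL vU \<inter> P_P pU"
        unfolding P_theta_relax_def using v zp by blast
    qed
    show "\<forall>z\<in>P_theta_relax E g b thL thU vL vU \<inter> P_P pU. \<exists>y\<in>S1. \<forall>i. y $ i \<le> z $ i"
    proof
      fix z assume "z \<in> P_theta_relax E g b thL thU vL vU \<inter> P_P pU"
      then have "z \<in> convex hull T" "z \<in> P_P pU" using relax by auto
      then show "\<exists>y\<in>S1. \<forall>i. y $ i \<le> z $ i" by (rule dom)
    qed
  qed
  show ?thesis using e1 e2 unfolding S1_def T_def by simp
qed

end
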